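(* Let $f\colon \mathcal{X}\times\mathcal{Y}\to\{0,1\}$ be a function and let $\mu$ be a distribution on $\mathcal{X}\times\mathcal{Y}$ with $\mathrm{supp}(\mu)\subseteq f^{-1}(1)$. Then \[ \mathrm{IC}^{\mathrm{external},1}_{\mu}[f,0]\ \le\ \lim_{q\to\infty}\frac{1}{q}\,\mathrm{CC}^{1^q}_{\mu^q}[f^q,0]. \]
   Context: All logarithms are base 2; all random variables have finite support. For a function $g$ on $\mathcal{X}\times\mathcal{Y}$ and an output value $a$, an $a$-proof for $g$ consists of a random message $M=M(X,Y)$ (a distribution over finite binary strings $m$ for each input $(x,y)$) together with acceptance functions $\mathrm{Acc}_A(x,m)\in\{0,1\}$ and $\mathrm{Acc}_B(y,m)\in\{0,1\}$ such that for all $(x,y)$: (i) if $g(x,y)=a$ then for every $m$ with $\Pr[M=m\mid (x,y)]>0$ we have $\mathrm{Acc}_A(x,m)=1$ and $\mathrm{Acc}_B(y,m)=1$; (ii) if $g(x,y)\ne a$ then for every $m$, $\mathrm{Acc}_A(x,m)=0$ or $\mathrm{Acc}_B(y,m)=0$. For $q\in\mathbb{N}$, $f^q$ is the function on $(\mathcal{X}^q\times\mathcal{Y}^q)$ mapping $((x_1,\dots,x_q),(y_1,\dots,y_q))$ to $(f(x_1,y_1),\dots,f(x_q,y_q))$, and $\mu^q$ is the product distribution (the $q$ pairs $(x_i,y_i)$ are i.i.d. from $\mu$). Define $\mathrm{CC}^{1^q}_{\mu^q}[f^q,0]=\inf\{\mathbb{E}_{(x,y)\sim\mu^q,\,m\sim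 M|_{(x,y)}}|m| : M \text{ a } 1^q\text{-proof for } f^q\}$, where $1^q$ is the all-ones output and $|m|$ is the length of $m$, and $\mathrm{IC}^{\mathrm{external},1}_{\mu}[f,0]=\inf\{I(XY;M): M \text{ a } 1\text{-proof for } f\}$, with $(X,Y)\sim\mu$ and $M\sim M|_{(X,Y)}$, and $I$ denoting mutual information. *)

theory Defs
  imports "HOL-Probability.Probability"
begin

(* A (nondeterministic, randomized) a-proof for g on the input domain A x B.  Acceptance values {0,1} are rendered as bool. *)
definition is_proof ::
  "'a set \<Rightarrow> 'b set \<Rightarrow> ('a \<Rightarrow> 'b \<Rightarrow> 'c) \<Rightarrow> 'c \<Rightarrow>
   ('a \<Rightarrow> 'b \<Rightarrow> bool list pmf) \<Rightarrow> ('a \<Rightarrow> bool list \<Rightarrow> bool) \<Rightarrow> ('b \<Rightarrow> bool list \<Rightarrow> bool) \<Rightarrow> bool"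
where
  "is_proof A B g a M AccA AccB \<longleftrightarrow>
     (\<forall>x\<in>A. \<forall>y\<in>B.
        finite (set_pmf (M x y)) \<and>
        (g x y = a \<longrightarrow> (\<forall>m\<in>set_pmf (M x y). AccA x m \<and> AccB y m)) \<and>
        (g x y \<noteq> a \<longrightarrow> (\<forall>m. \<not> AccA x m \<or> \<not> AccB y m)))"

definition joint_pmf :: "('a \<times> 'b) pmf \<Rightarrow> ('a \<Rightarrow> 'b \<Rightarrow> 'm pmf) \<Rightarrow> (('a \<times> 'b) \<times> 'm) pmf" where
  "joint_pmf mu M = bind_pmf mu (\<lambda>(x, y). map_pmf (\<lambda>m. ((x, y), m)) (M x y))"

definition mutual_info_pmf :: "('u \<times> 'v) pmf \<Rightarrow> real" where
  "mutual_info_pmf J =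
     (\<Sum>(u, v)\<in>set_pmf J. pmf J (u, v) *
        log 2 (pmf J (u, v) / (pmf (map_pmf fst J) u * pmf (map_pmf snd J) v)))"

definition IC_ext1 :: "('x \<Rightarrow> 'y \<Rightarrow> bool) \<Rightarrow> ('x \<times> 'y) pmf \<Rightarrow> real" where
  "IC_ext1 f mu = Inf {mutual_info_pmf (joint_pmf mu M) | M AccA AccB.
                         is_proof UNIV UNIV f True M AccA AccB}"

(* f^q on X^q x Y^q (tuples as lists of length q) *)
definition fpow :: "('x \<Rightarrow> 'y \<Rightarrow> 'c) \<Rightarrow> 'x list \<Rightarrow> 'y list \<Rightarrow> 'c list" where
  "fpow f xs ys = map (\<lambda>(x, y). f x y) (zip xs ys)"

(* mu^q: q i.i.d. pairs, rearranged as ((x_1..x_q),(y_1..y_q)) *)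
definition pmf_pow :: "('x \<times> 'y) pmf \<Rightarrow> nat \<Rightarrow> ('x list \<times> 'y list) pmf" where
  "pmf_pow mu q = map_pmf (\<lambda>zs. (map fst zs, map snd zs)) (replicate_pmf q mu)"

definition CC_pow :: "('x \<Rightarrow> 'y \<Rightarrow> bool) \<Rightarrow> ('x \<times> 'y) pmf \<Rightarrow> nat \<Rightarrow> real" where
  "CC_pow f mu q = Inf {measure_pmf.expectation (joint_pmf (pmf_pow mu q) M) (\<lambda>(_, m). real (length m))
                       | M AccA AccB.
                         is_proof {xs. length xs = q} {ys. length ys = q} (fpow f) (replicate q True)
                                  M AccA AccB}"

end

theory Submission
  imports Defs
begin

lemma gibbs:
  fixes a b :: "'s \<Rightarrow> real"
  assumes "finite S" "\<And>s. s \<in> S \<Longrightarrow> a s > 0" "\<And>s. s \<in> S \<Longrightarrow> b s > 0"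
    "sum b S \<le> sum a S"
  shows "(\<Sum>s\<in>S. a s * log 2 (b s / a s)) \<le> 0"
proof -
  have "a s * ln (b s / a s) \<le> b s - a s" if "s \<in> S" for s
  proof -
    have "ln (b s / a s) \<le> b s / a s - 1" using assms(2,3)[OF that] by (intro ln_le_minus_one) simp
    then have "a s * ln (b s / a s) \<le> a s * (b s / a s - 1)"
      using assms(2)[OF that] by (intro mult_left_mono) auto
    also have "\<dots> = b s - a s" using assms(2)[OF that] by (simp add: field_simps)
    finally show ?thesis .
  qed
  then have "(\<Sum>s\<in>S. a s * ln (b s / a s)) \<le> (\<Sum>s\<in>S. b s - a s)" by (rule sum_mono)
  also have "\<dots> \<le> 0" using assms(4) by (simp add: sum_subtractf)
  finally have *: "(\<Sum>s\<in>S. a s * ln (b s / a s)) \<le> 0" .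
  have "(\<Sum>s\<in>S. a s * log 2 (b s / a s)) = (\<Sum>s\<in>S. a s * ln (b s / a s)) / ln 2"
    by (simp add: log_def sum_divide_distrib)
  also have "\<dots> \<le> 0" using * by (simp add: divide_nonpos_pos)
  finally show ?thesis .
qed

lemma sum_pmf_le_1: "finite A \<Longrightarrow> sum (pmf M) A \<le> 1"
  by (metis measure_measure_pmf_finite measure_pmf.prob_le_1)

lemma mutual_info_nonneg: "mutual_info_pmf J \<ge> 0"
proof (cases "finite (set_pmf J)")
  case False then show ?thesis by (simp add: mutual_info_pmf_def)
next
  case True
  define S where "S = set_pmf J"
  define b where "b = (\<lambda>(u,v). pmf (map_pmf fst J) u * pmf (map_pmf snd J) v)"
  have fin: "finite S" using True S_def by simp
  have pos_a: "pmf J s > 0" if "s \<in> S" for s using that S_def by (simp add: pmf_positive)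
  have pos_b: "b s > 0" if "s \<in> S" for s
  proof -
    obtain u v where s: "s = (u,v)" by force
    have "u \<in> set_pmf (map_pmf fst J)" "v \<in> set_pmf (map_pmf snd J)"
      using that s S_def by force+
    then show ?thesis unfolding b_def s by (simp add: pmf_positive)
  qed
  have "sum b S \<le> sum b (fst ` S \<times> snd ` S)"
    using fin pos_b by (intro sum_mono2) (force simp: b_def pmf_nonneg)+
  also have "\<dots> = sum (pmf (map_pmf fst J)) (fst ` S) * sum (pmf (map_pmf snd J)) (snd ` S)"
    unfolding b_def by (simp add: sum_product sum.cartesian_product)
  also have "\<dots> \<le> 1 * 1"
    using fin by (intro mult_mono sum_pmf_le_1) (auto simp: sum_nonneg pmf_nonneg)
  also have "\<dots> = sum (pmf J) S" using fin S_def by (simp add: sum_pmf_eq_1)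
  finally have le: "sum b S \<le> sum (pmf J) S" .
  have "(\<Sum>s\<in>S. pmf J s * log 2 (b s / pmf J s)) \<le> 0"
    by (rule gibbs[OF fin pos_a pos_b le])
  moreover have "mutual_info_pmf J = - (\<Sum>s\<in>S. pmf J s * log 2 (b s / pmf J s))"
    unfolding mutual_info_pmf_def S_def sum_negf[symmetric]
    apply (rule sum.cong[OF refl])
    using pos_a pos_b S_def by (auto simp: b_def log_divide algebra_simps)
  ultimately show ?thesis by simp
qed


lemma sum_lists_prod:
  "(\<Sum>zs\<in>{zs::'z::finite list. length zs = n}. \<Prod>j<n. g j (zs!j)) = (\<Prod>j<n. \<Sum>z\<in>UNIV. (g j z :: real))"
proof (induction n arbitrary: g)
  case 0 then show ?case by simp
next
  case (Suc n)
  have eq: "{zs::'z list. length zs = Suc n} = (\<lambda>(z,zs). z#zs) ` (UNIV \<times> {zs. length zs = n})"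
    by (auto simp: length_Suc_conv image_iff)
  have inj: "inj_on (\<lambda>(z,zs). z#zs) (UNIV \<times> {zs::'z list. length zs = n})"
    by (auto simp: inj_on_def)
  have "(\<Sum>zs\<in>{zs::'z list. length zs = Suc n}. \<Prod>j<Suc n. g j (zs!j))
      = (\<Sum>(z,zs)\<in>UNIV \<times> {zs::'z list. length zs = n}. \<Prod>j<Suc n. g j ((z#zs)!j))"
    unfolding eq by (subst sum.reindex[OF inj]) (simp add: case_prod_unfold)
  also have "\<dots> = (\<Sum>(z,zs)\<in>UNIV \<times> {zs::'z list. length zs = n}. g 0 z * (\<Prod>j<n. g (Suc j) (zs!j)))"
    by (intro sum.cong refl) (auto simp del: prod.lessThan_Suc simp: prod.lessThan_Suc_shift)
  also have "\<dots> = (\<Sum>z\<in>UNIV. g 0 z * (\<Sum>zs\<in>{zs::'z list. length zs = n}. \<Prod>j<n. g (Suc j) (zs!j)))"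
    by (simp add: sum.cartesian_product[symmetric] sum_distrib_left)
  also have "\<dots> = (\<Sum>z\<in>UNIV. g 0 z) * (\<Prod>j<n. \<Sum>z\<in>UNIV. g (Suc j) z)"
    using Suc.IH[of "\<lambda>j. g (Suc j)"] by (simp add: sum_distrib_right)
  also have "\<dots> = (\<Prod>j<Suc n. \<Sum>z\<in>UNIV. g j z)"
    by (simp del: prod.lessThan_Suc add: prod.lessThan_Suc_shift)
  finally show ?case .
qed

lemma replicate_pmf_Suc_map:
  "replicate_pmf (Suc n) p = map_pmf (\<lambda>(x,xs). x#xs) (pair_pmf p (replicate_pmf n p))"
  by (simp add: pair_pmf_def map_pmf_def bind_assoc_pmf bind_return_pmf)

lemma pmf_replicate_pmf:
  "length zs = n \<Longrightarrow> pmf (replicate_pmf n p) zs = (\<Prod>j<n. pmf p (zs!j))"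
proof (induction n arbitrary: zs)
  case 0 then show ?case by simp
next
  case (Suc n)
  then obtain z zs' where zs: "zs = z # zs'" "length zs' = n" by (auto simp: length_Suc_conv)
  have inj: "inj (\<lambda>(x::'a, xs). x#xs)" by (auto simp: inj_def)
  have "pmf (replicate_pmf (Suc n) p) zs = pmf (pair_pmf p (replicate_pmf n p)) (z, zs')"
    unfolding replicate_pmf_Suc_map zs
    using pmf_map_inj'[OF inj, of _ "(z,zs')"] by simp
  also have "\<dots> = pmf p z * (\<Prod>j<n. pmf p (zs'!j))" by (simp add: pmf_pair Suc.IH zs)
  finally show ?case by (simp del: prod.lessThan_Suc add: zs prod.lessThan_Suc_shift)
qed

lemma map_nth_replicate_pmf:
  "j < n \<Longrightarrow> map_pmf (\<lambda>zs. zs!j) (replicate_pmf n p) = p"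
proof (induction n arbitrary: j)
  case 0 then show ?case by simp
next
  case (Suc n)
  show ?case
  proof (cases j)
    case 0
    then show ?thesis by (simp add: map_pmf_def bind_assoc_pmf bind_return_pmf bind_return_pmf')
  next
    case (Suc j')
    then have "j' < n" using Suc.prems by simp
    have "map_pmf (\<lambda>zs. zs!j) (replicate_pmf (Suc n) p)
          = bind_pmf p (\<lambda>x. map_pmf (\<lambda>zs. zs!j') (replicate_pmf n p))"
      using Suc by (simp add: map_pmf_def bind_assoc_pmf bind_return_pmf)
    also have "\<dots> = p" using Suc.IH[OF \<open>j' < n\<close>] by (simp add: bind_pmf_const)
    finally show ?thesis .
  qed
qed

lemma pmf_map_snd_sum:
  fixes K :: "('u::finite \<times> 'v) pmf"
  shows "pmf (map_pmf snd K) v = (\<Sum>u\<in>UNIV. pmf K (u, v))"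
proof -
  have "pmf (map_pmf snd K) v = measure_pmf.prob K (UNIV \<times> {v})"
  proof -
    have "snd -` {v} = (UNIV::'u set) \<times> {v}" by auto
    then show ?thesis by (simp add: pmf_map)
  qed
  also have "\<dots> = sum (pmf K) (UNIV \<times> {v})" by (simp add: measure_measure_pmf_finite)
  also have "\<dots> = (\<Sum>u\<in>UNIV. pmf K (u, v))"
    by (rule sum.reindex_bij_witness[of _ "\<lambda>u. (u,v)" fst]) auto
  finally show ?thesis .
qed

lemma mi_expectation:
  assumes "finite (set_pmf J)"
  shows "mutual_info_pmf J = measure_pmf.expectation J
     (\<lambda>(u,v). log 2 (pmf J (u,v) / (pmf (map_pmf fst J) u * pmf (map_pmf snd J) v)))"
  unfolding mutual_info_pmf_def
  by (subst integral_measure_pmf_real[OF assms]) (auto simp: case_prod_unfold mult.commute intro!: sum.cong)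


lemma log_prod:
  assumes "finite I" "\<And>i. i \<in> I \<Longrightarrow> f i > 0"
  shows "log b (prod f I) = (\<Sum>i\<in>I. log b (f i))"
  unfolding log_def using assms by (subst ln_prod) (auto simp: sum_divide_distrib dest: less_imp_neq[symmetric])

lemma log_add_pos: "(a::real) > 0 \<Longrightarrow> b > 0 \<Longrightarrow> log c a + log c b = log c (a * b)"
  by (simp add: log_mult)

lemma pmf_le_pmf_map_fst: "pmf J (a, b) \<le> pmf (map_pmf fst J) a"
proof -
  have "pmf J (a,b) = measure_pmf.prob J {(a,b)}" by (simp add: measure_pmf_single)
  also have "\<dots> \<le> measure_pmf.prob J (fst -` {a})" by (intro measure_pmf.finite_measure_mono) auto
  also have "\<dots> = pmf (map_pmf fst J) a" by (simp add: pmf_map)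
  finally show ?thesis .
qed

lemma core:
  fixes J :: "('z::finite list \<times> 'm) pmf" and w :: "'m \<Rightarrow> real"
  assumes fin: "finite (set_pmf J)"
    and marg: "map_pmf fst J = replicate_pmf q mu"
    and wpos: "\<And>m. w m > 0"
    and wsum: "sum w (snd ` set_pmf J) \<le> 1"
  shows "(\<Sum>j<q. mutual_info_pmf (map_pmf (\<lambda>(zs,m). (zs!j, m)) J))
          \<le> measure_pmf.expectation J (\<lambda>(zs,m). - log 2 (w m))"
proof -
  define Jj where "Jj j = map_pmf (\<lambda>(zs,m). (zs!j, m)) J" for j
  define pm where "pm = pmf (map_pmf snd J)"
  define S where "S = set_pmf J"
  have finS: "finite S" using fin S_def by simp
  have fst_Jj: "map_pmf fst (Jj j) = mu" if "j < q" for j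
  proof -
    have "map_pmf fst (Jj j) = map_pmf (\<lambda>zs. zs!j) (map_pmf fst J)"
      by (simp add: Jj_def map_pmf_comp case_prod_unfold)
    also have "\<dots> = mu" using marg map_nth_replicate_pmf[OF that] by simp
    finally show ?thesis .
  qed
  have snd_Jj: "map_pmf snd (Jj j) = map_pmf snd J" for j
    by (simp add: Jj_def map_pmf_comp case_prod_unfold)
  have finJj: "finite (set_pmf (Jj j))" for j using fin by (simp add: Jj_def)
  define phi where "phi j = (\<lambda>(z,m). log 2 (pmf (Jj j) (z,m) / (pmf mu z * pm m)))" for j
  have mi: "mutual_info_pmf (Jj j) = measure_pmf.expectation J (\<lambda>(zs,m). phi j (zs!j, m))"
    if "j < q" for j
  proof -
    have "mutual_info_pmf (Jj j) = measure_pmf.expectation (Jj j) (phi j)"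
      unfolding mi_expectation[OF finJj] phi_def fst_Jj[OF that] snd_Jj pm_def ..
    also have "\<dots> = measure_pmf.expectation J (\<lambda>(zs,m). phi j (zs!j, m))"
      unfolding Jj_def by (simp add: case_prod_unfold)
    finally show ?thesis .
  qed
  have intJ: "integrable (measure_pmf J) g" for g :: "_ \<Rightarrow> real"
    using fin by (rule integrable_measure_pmf_finite)
  have sumMI: "(\<Sum>j<q. mutual_info_pmf (Jj j))
      = measure_pmf.expectation J (\<lambda>(zs,m). \<Sum>j<q. phi j (zs!j, m))"
    by (simp add: mi case_prod_unfold Bochner_Integration.integral_sum[OF intJ])
  have inS: "zs \<in> set_pmf (replicate_pmf q mu) \<and> m \<in> set_pmf (map_pmf snd J)" if "(zs,m) \<in> S" for zs m
    using that S_def marg[symmetric] by (force simp del: set_replicate_pmf)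
  have lenS: "length zs = q" and zsmu: "\<And>j. j < q \<Longrightarrow> zs!j \<in> set_pmf mu" if "(zs,m) \<in> S" for zs m
    using inS[OF that] by (auto simp: set_replicate_pmf in_lists_conv_set)
  have pmpos: "pm m > 0" if "(zs,m) \<in> S" for zs m
    using inS[OF that] by (simp add: pm_def pmf_positive)
  have Jjpos: "pmf (Jj j) (zs!j, m) > 0" if "(zs,m) \<in> S" for zs m j
  proof -
    have "(zs!j, m) \<in> set_pmf (Jj j)" using that S_def by (force simp: Jj_def)
    then show ?thesis by (simp add: pmf_positive)
  qed
  define R where "R = (\<lambda>(zs,m). w m * (\<Prod>j<q. pmf (Jj j) (zs!j, m) / pm m))"
  have Rpos: "R s > 0" if "s \<in> S" for s
  proof -
    obtain zs m where s: "s = (zs,m)" by force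
    show ?thesis using that Jjpos[of zs m] pmpos[of zs m] wpos[of m] unfolding s
      by (auto simp: R_def intro!: prod_pos divide_pos_pos mult_pos_pos)
  qed
  have Rnn: "R s \<ge> 0" for s
    using wpos by (cases s) (auto simp: R_def pm_def intro!: mult_nonneg_nonneg prod_nonneg divide_nonneg_nonneg less_imp_le[OF wpos])
  define Z where "Z = {zs::'z list. length zs = q}"
  define T where "T = snd ` S"
  have "sum R S \<le> sum R (Z \<times> T)"
    using finS lenS by (intro sum_mono2) (auto simp: Z_def T_def Rnn finite_list_length intro!: rev_image_eqI)
  also have "\<dots> = (\<Sum>m\<in>T. \<Sum>zs\<in>Z. R (zs, m))"
  proof -
    have "sum R (Z \<times> T) = (\<Sum>zs\<in>Z. \<Sum>m\<in>T. R (zs, m))"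
      by (simp add: sum.cartesian_product)
    then show ?thesis by (simp add: sum.swap[of _ Z])
  qed
  also have "\<dots> = (\<Sum>m\<in>T. w m)"
  proof (intro sum.cong refl)
    fix m assume "m \<in> T"
    then obtain zs where "(zs,m) \<in> S" by (auto simp: T_def)
    then have pmm: "pm m > 0" by (rule pmpos)
    have "(\<Sum>zs\<in>Z. R (zs, m)) = w m * (\<Sum>zs\<in>Z. \<Prod>j<q. pmf (Jj j) (zs!j, m) / pm m)"
      by (simp add: R_def sum_distrib_left)
    also have "\<dots> = w m * (\<Prod>j<q. \<Sum>z\<in>UNIV. pmf (Jj j) (z, m) / pm m)"
      unfolding Z_def by (subst sum_lists_prod) simp
    also have "\<dots> = w m * (\<Prod>j<q. pm m / pm m)"
      by (simp add: sum_divide_distrib[symmetric] pmf_map_snd_sum[symmetric] snd_Jj pm_def)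
    also have "\<dots> = w m" using pmm by simp
    finally show "(\<Sum>zs\<in>Z. R (zs, m)) = w m" .
  qed
  also have "\<dots> \<le> 1" using wsum by (simp add: T_def S_def)
  also have "\<dots> = sum (pmf J) S" using finS by (simp add: S_def sum_pmf_eq_1)
  finally have Rsum: "sum R S \<le> sum (pmf J) S" .
  have gib: "(\<Sum>s\<in>S. pmf J s * log 2 (R s / pmf J s)) \<le> 0"
    by (rule gibbs[OF finS _ Rpos Rsum]) (simp add: S_def pmf_positive)
  have pw: "(\<Sum>j<q. phi j (zs!j, m)) + log 2 (w m) \<le> log 2 (R (zs,m) / pmf J (zs,m))"
    if s: "(zs,m) \<in> S" for zs m
  proof -
    have pJ: "pmf J (zs,m) > 0" using s S_def by (simp add: pmf_positive)
    have mupos: "pmf mu (zs!j) > 0" if "j < q" for j using zsmu[OF s that] by (simp add: pmf_positive)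
    have P: "pmf (replicate_pmf q mu) zs = (\<Prod>j<q. pmf mu (zs!j))"
      using lenS[OF s] by (rule pmf_replicate_pmf)
    have Ppos: "(\<Prod>j<q. pmf mu (zs!j)) > 0" using mupos by (intro prod_pos) auto
    have PJ: "pmf J (zs,m) \<le> (\<Prod>j<q. pmf mu (zs!j))"
      using pmf_le_pmf_map_fst[of J zs m] marg P by simp
    have "(\<Sum>j<q. phi j (zs!j, m)) = log 2 (\<Prod>j<q. pmf (Jj j) (zs!j, m) / (pmf mu (zs!j) * pm m))"
      using Jjpos[OF s] mupos pmpos[OF s]
      by (subst log_prod) (auto simp: phi_def intro!: divide_pos_pos mult_pos_pos)
    also have "(\<Prod>j<q. pmf (Jj j) (zs!j, m) / (pmf mu (zs!j) * pm m))
        = (\<Prod>j<q. pmf (Jj j) (zs!j, m) / pm m) / (\<Prod>j<q. pmf mu (zs!j))"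
      by (simp add: prod_dividef[symmetric] prod.distrib[symmetric] field_simps)
    finally have "(\<Sum>j<q. phi j (zs!j, m)) + log 2 (w m)
        = log 2 ((\<Prod>j<q. pmf (Jj j) (zs!j, m) / pm m) / (\<Prod>j<q. pmf mu (zs!j))) + log 2 (w m)" by simp
    also have "\<dots> = log 2 (R (zs,m) / (\<Prod>j<q. pmf mu (zs!j)))"
    proof -
      have X: "(\<Prod>j<q. pmf (Jj j) (zs!j, m) / pm m) / (\<Prod>j<q. pmf mu (zs!j)) > 0"
        using Ppos Jjpos[OF s] pmpos[OF s] by (auto intro!: prod_pos divide_pos_pos)
      have "log 2 ((\<Prod>j<q. pmf (Jj j) (zs!j, m) / pm m) / (\<Prod>j<q. pmf mu (zs!j))) + log 2 (w m)
          = log 2 ((\<Prod>j<q. pmf (Jj j) (zs!j, m) / pm m) / (\<Prod>j<q. pmf mu (zs!j)) * w m)"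
        using X wpos[of m] by (rule log_add_pos)
      also have "(\<Prod>j<q. pmf (Jj j) (zs!j, m) / pm m) / (\<Prod>j<q. pmf mu (zs!j)) * w m
          = R (zs,m) / (\<Prod>j<q. pmf mu (zs!j))" by (simp add: R_def)
      finally show ?thesis .
    qed
    also have "\<dots> \<le> log 2 (R (zs,m) / pmf J (zs,m))"
      using Rpos[OF s] Ppos pJ PJ
      by (subst log_le_cancel_iff) (auto intro!: divide_left_mono divide_pos_pos)
    finally show ?thesis .
  qed
  have "measure_pmf.expectation J (\<lambda>(zs,m). \<Sum>j<q. phi j (zs!j, m))
        - measure_pmf.expectation J (\<lambda>(zs,m). - log 2 (w m))
      = measure_pmf.expectation J (\<lambda>(zs,m). (\<Sum>j<q. phi j (zs!j, m)) + log 2 (w m))"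
    by (subst Bochner_Integration.integral_diff[OF intJ intJ, symmetric]) (simp add: case_prod_unfold)
  also have "\<dots> = (\<Sum>s\<in>S. ((\<lambda>(zs,m). (\<Sum>j<q. phi j (zs!j, m)) + log 2 (w m)) s) * pmf J s)"
    by (rule integral_measure_pmf_real) (auto simp: S_def fin)
  also have "\<dots> \<le> (\<Sum>s\<in>S. pmf J s * log 2 (R s / pmf J s))"
    by (intro sum_mono) (auto simp: mult.commute pmf_nonneg intro!: mult_left_mono pw)
  also have "\<dots> \<le> 0" by (rule gib)
  finally show ?thesis unfolding sumMI[unfolded Jj_def] by simp
qed


lemma mi_map_inj:
  fixes J :: "('u \<times> 'v) pmf" and g :: "'v \<Rightarrow> 'w"
  assumes "inj g"
  shows "mutual_info_pmf (map_pmf (\<lambda>(u,v). (u, g v)) J) = mutual_info_pmf J"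
proof -
  have injh: "inj (\<lambda>(u::'u,v). (u, g v))" using assms by (auto simp: inj_def)
  have f1: "map_pmf fst (map_pmf (\<lambda>(u,v). (u, g v)) J) = map_pmf fst J"
    by (simp add: map_pmf_comp case_prod_unfold)
  have f2: "map_pmf snd (map_pmf (\<lambda>(u,v). (u, g v)) J) = map_pmf g (map_pmf snd J)"
    by (simp add: map_pmf_comp case_prod_unfold)
  have e1: "pmf (map_pmf (\<lambda>(u,v). (u, g v)) J) (a, g b) = pmf J (a,b)" for a b
    using pmf_map_inj'[OF injh, of J "(a,b)"] by simp
  have e2: "pmf (map_pmf g (map_pmf snd J)) (g b) = pmf (map_pmf snd J) b" for b
    using pmf_map_inj'[OF assms] by simp
  show ?thesis
    unfolding mutual_info_pmf_def set_map_pmf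
    apply (subst sum.reindex[OF inj_on_subset[OF injh subset_UNIV]])
    apply (simp only: o_def)
    apply (intro sum.cong refl)
    apply (auto simp: f1 f2 e1 e2)
    done
qed

lemma mi_mixture:
  fixes Jd :: "'j \<Rightarrow> ('z \<times> 'm) pmf"
  assumes I: "finite I" "I \<noteq> {}"
    and fin: "\<And>j. j \<in> I \<Longrightarrow> finite (set_pmf (Jd j))"
    and marg: "\<And>j. j \<in> I \<Longrightarrow> map_pmf fst (Jd j) = mu"
  shows "mutual_info_pmf (bind_pmf (pmf_of_set I) (\<lambda>j. map_pmf (\<lambda>(z,m). (z,(j,m))) (Jd j)))
       = (\<Sum>j\<in>I. mutual_info_pmf (Jd j)) / card I"
proof -
  define e where "e j = (\<lambda>(z::'z,m::'m). (z,(j::'j,m)))" for j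
  define J' where "J' = bind_pmf (pmf_of_set I) (\<lambda>j. map_pmf (e j) (Jd j))"
  have inje: "inj (e j)" for j by (auto simp: e_def inj_def)
  have cI: "real (card I) > 0" using I by (simp add: card_gt_0_iff)
  have finJ': "finite (set_pmf J')" using I fin by (auto simp: J'_def)
  have pJ': "pmf J' (z,(j,m)) = pmf (Jd j) (z,m) / card I" if "j \<in> I" for z j m
  proof -
    have "pmf J' (z,(j,m)) = (\<Sum>j'\<in>I. pmf (map_pmf (e j') (Jd j')) (z,(j,m))) / card I"
      unfolding J'_def by (rule pmf_bind_pmf_of_set[OF I(2) I(1)])
    also have "(\<Sum>j'\<in>I. pmf (map_pmf (e j') (Jd j')) (z,(j,m)))
        = (\<Sum>j'\<in>I. if j' = j then pmf (Jd j) (z,m) else 0)"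
    proof (intro sum.cong refl)
      fix j' assume "j' \<in> I"
      show "pmf (map_pmf (e j') (Jd j')) (z,(j,m)) = (if j' = j then pmf (Jd j) (z,m) else 0)"
      proof (cases "j' = j")
        case True
        then show ?thesis using pmf_map_inj'[OF inje, of j "Jd j" "(z,m)"] by (simp add: e_def)
      next
        case False
        then show ?thesis by (subst pmf_map_outside) (auto simp: e_def)
      qed
    qed
    also have "\<dots> = pmf (Jd j) (z,m)" using that I by simp
    finally show ?thesis .
  qed
  have fstJ': "map_pmf fst J' = mu"
  proof -
    have "map_pmf fst J' = bind_pmf (pmf_of_set I) (\<lambda>j. map_pmf fst (Jd j))"
      by (simp add: J'_def map_bind_pmf map_pmf_comp e_def case_prod_unfold)
    also have "\<dots> = bind_pmf (pmf_of_set I) (\<lambda>_. mu)"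
      using I marg by (intro bind_pmf_cong) auto
    finally show ?thesis by (simp add: bind_pmf_const)
  qed
  have psndJ': "pmf (map_pmf snd J') (j,m) = pmf (map_pmf snd (Jd j)) m / card I" if "j \<in> I" for j m
  proof -
    have "map_pmf snd J' = bind_pmf (pmf_of_set I) (\<lambda>j. map_pmf (Pair j) (map_pmf snd (Jd j)))"
      by (simp add: J'_def map_bind_pmf map_pmf_comp e_def case_prod_unfold)
    then have "pmf (map_pmf snd J') (j,m) = (\<Sum>j'\<in>I. pmf (map_pmf (Pair j') (map_pmf snd (Jd j'))) (j,m)) / card I"
      using I by (simp add: pmf_bind_pmf_of_set)
    also have "(\<Sum>j'\<in>I. pmf (map_pmf (Pair j') (map_pmf snd (Jd j'))) (j,m))
        = (\<Sum>j'\<in>I. if j' = j then pmf (map_pmf snd (Jd j)) m else 0)"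
    proof (intro sum.cong refl)
      fix j' assume "j' \<in> I"
      show "pmf (map_pmf (Pair j') (map_pmf snd (Jd j'))) (j,m) = (if j' = j then pmf (map_pmf snd (Jd j)) m else 0)"
      proof (cases "j' = j")
        case True
        then show ?thesis using pmf_map_inj'[of "Pair j" "map_pmf snd (Jd j)" m] by (simp add: inj_def)
      next
        case False
        then show ?thesis by (subst pmf_map_outside) auto
      qed
    qed
    also have "\<dots> = pmf (map_pmf snd (Jd j)) m" using that I by simp
    finally show ?thesis .
  qed
  define phi where "phi = (\<lambda>(u,v). log 2 (pmf J' (u,v) / (pmf (map_pmf fst J') u * pmf (map_pmf snd J') v)))"
  have "mutual_info_pmf J' = measure_pmf.expectation J' phi"
    unfolding phi_def by (rule mi_expectation[OF finJ'])
  also have "\<dots> = (\<Sum>j\<in>I. measure_pmf.expectation (map_pmf (e j) (Jd j)) phi /\<^sub>R real (card I))"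
    unfolding J'_def using I fin by (intro pmf_expectation_bind_pmf_of_set) auto
  also have "\<dots> = (\<Sum>j\<in>I. mutual_info_pmf (Jd j) / card I)"
  proof (intro sum.cong refl)
    fix j assume j: "j \<in> I"
    have "measure_pmf.expectation (map_pmf (e j) (Jd j)) phi = measure_pmf.expectation (Jd j) (\<lambda>s. phi (e j s))"
      by simp
    also have "\<dots> = measure_pmf.expectation (Jd j)
         (\<lambda>(u,v). log 2 (pmf (Jd j) (u,v) / (pmf (map_pmf fst (Jd j)) u * pmf (map_pmf snd (Jd j)) v)))"
      using cI by (intro Bochner_Integration.integral_cong refl)
        (auto simp: phi_def e_def pJ'[OF j] psndJ'[OF j] fstJ' marg[OF j])
    also have "\<dots> = mutual_info_pmf (Jd j)" using fin[OF j] by (rule mi_expectation[symmetric])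
    finally show "measure_pmf.expectation (map_pmf (e j) (Jd j)) phi /\<^sub>R real (card I) = mutual_info_pmf (Jd j) / card I"
      by (simp add: divide_inverse_commute)
  qed
  also have "\<dots> = (\<Sum>j\<in>I. mutual_info_pmf (Jd j)) / card I" by (simp add: sum_divide_distrib)
  finally show ?thesis unfolding J'_def e_def .
qed


definition ins :: "nat \<Rightarrow> 'a \<Rightarrow> 'a list \<Rightarrow> 'a list" where
  "ins j z ws = take j ws @ z # drop j ws"

definition enc :: "nat \<times> bool list \<Rightarrow> bool list" where
  "enc p = replicate (fst p) True @ False # snd p"

lemma rep_true_eq: "replicate n True @ False # m = replicate n' True @ False # m' \<Longrightarrow> n = n' \<and> m = m'"
proof (induction n arbitrary: n')
  case 0 then show ?case by (cases n') auto
next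
  case (Suc n) then show ?case by (cases n') auto
qed

lemma inj_enc: "inj enc"
  unfolding inj_def enc_def using rep_true_eq by (metis prod.collapse)

lemma length_ins: "j \<le> length ws \<Longrightarrow> length (ins j z ws) = Suc (length ws)"
  by (simp add: ins_def)

lemma nth_ins: "j \<le> length ws \<Longrightarrow> ins j z ws ! j = z"
  by (simp add: ins_def nth_append)

lemma set_ins: "set (ins j z ws) = insert z (set ws)"
  unfolding ins_def by (metis append_take_drop_id set_append set_simps(2) Un_insert_right Un_commute insert_commute set_append)

lemma ins_Suc: "ins (Suc j) z (a # ws) = a # ins j z ws"
  by (simp add: ins_def)

lemma rep_ins:
  "j \<le> n \<Longrightarrow> replicate_pmf (Suc n) p = bind_pmf p (\<lambda>z. bind_pmf (replicate_pmf n p) (\<lambda>ws. return_pmf (ins j z ws)))"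
proof (induction n arbitrary: j)
  case 0 then show ?case by (simp add: ins_def)
next
  case (Suc n)
  show ?case
  proof (cases j)
    case 0 then show ?thesis by (simp add: ins_def)
  next
    case (Suc j')
    then have j': "j' \<le> n" using Suc.prems by simp
    have "replicate_pmf (Suc (Suc n)) p
        = bind_pmf p (\<lambda>a. bind_pmf (replicate_pmf (Suc n) p) (\<lambda>xs. return_pmf (a # xs)))" by simp
    also have "\<dots> = bind_pmf p (\<lambda>a. bind_pmf p (\<lambda>z. bind_pmf (replicate_pmf n p) (\<lambda>ws. return_pmf (a # ins j' z ws))))"
      unfolding Suc.IH[OF j'] by (simp add: bind_assoc_pmf bind_return_pmf)
    also have "\<dots> = bind_pmf p (\<lambda>z. bind_pmf p (\<lambda>a. bind_pmf (replicate_pmf n p) (\<lambda>ws. return_pmf (a # ins j' z ws))))"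
      by (rule bind_commute_pmf)
    also have "\<dots> = bind_pmf p (\<lambda>z. bind_pmf (replicate_pmf (Suc n) p) (\<lambda>ws. return_pmf (ins j z ws)))"
      by (simp add: Suc ins_Suc bind_assoc_pmf bind_return_pmf)
    finally show ?thesis .
  qed
qed

lemma fpow_all:
  assumes "length xs = q" "length ys = q"
  shows "fpow f xs ys = replicate q True \<longleftrightarrow> (\<forall>i<q. f (xs!i) (ys!i))"
  using assms by (auto simp: fpow_def list_eq_iff_nth_eq)

lemma card_bool_lists: "card {m::bool list. length m = L} = 2 ^ L"
  using card_lists_length_eq[of "UNIV::bool set" L] by simp

lemma sum_geom_lists:
  fixes t :: real
  assumes t: "0 < t" "t < 1/2" and A: "finite (A :: bool list set)"
  shows "(\<Sum>m\<in>A. (1 - 2*t) * t ^ length m) \<le> 1"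
proof -
  define N where "N = Suc (\<Sum>m\<in>A. length m)"
  define B where "B = (\<Union>L\<in>{..<N}. {m::bool list. length m = L})"
  have AB: "A \<subseteq> B"
  proof
    fix m assume "m \<in> A"
    then have "length m \<le> (\<Sum>m\<in>A. length m)" using A by (intro member_le_sum) auto
    then show "m \<in> B" by (auto simp: B_def N_def)
  qed
  have finB: "finite B" by (auto simp: B_def finite_list_length)
  have "(\<Sum>m\<in>A. (1 - 2*t) * t ^ length m) \<le> (\<Sum>m\<in>B. (1 - 2*t) * t ^ length m)"
    using AB finB t by (intro sum_mono2) auto
  also have "(\<Sum>m\<in>B. (1 - 2*t) * t ^ length m) = (\<Sum>L<N. \<Sum>m\<in>{m::bool list. length m = L}. (1 - 2*t) * t ^ length m)"
    unfolding B_def by (rule sum.UNION_disjoint) (auto simp: finite_list_length)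
  also have "\<dots> = (\<Sum>L<N. (1 - 2*t) * (2*t) ^ L)"
    by (intro sum.cong refl) (simp add: card_bool_lists power_mult_distrib)
  also have "\<dots> = (1 - 2*t) * ((1 - (2*t)^N) / (1 - 2*t))"
  proof -
    have "(\<Sum>L<N. (2*t) ^ L) = (1 - (2*t)^N) / (1 - 2*t)" using t by (subst sum_gp_strict) simp
    then show ?thesis by (simp only: sum_distrib_left[symmetric])
  qed
  also have "\<dots> = 1 - (2*t)^N" using t by simp
  also have "\<dots> \<le> 1" using t by simp
  finally show ?thesis .
qed


lemma set_replicate_pmf_len: "xs \<in> set_pmf (replicate_pmf n p) \<Longrightarrow> length xs = n \<and> set xs \<subseteq> set_pmf p"
  by (auto simp: set_replicate_pmf)

lemma finite_set_replicate_pmf: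
  "finite (set_pmf (replicate_pmf n (p :: 'a::finite pmf)))"
  by (rule finite_subset[OF _ finite_list_length[of n]]) (auto simp: set_replicate_pmf)

lemma joint_pmf_pow:
  "joint_pmf (pmf_pow mu q) M =
   map_pmf (\<lambda>(zs,m). ((map fst zs, map snd zs), m))
     (bind_pmf (replicate_pmf q mu) (\<lambda>zs. map_pmf (Pair zs) (M (map fst zs) (map snd zs))))"
  by (simp add: joint_pmf_def pmf_pow_def bind_map_pmf map_bind_pmf map_pmf_comp)

lemma single_copy:
  fixes f :: "'x::finite \<Rightarrow> 'y::finite \<Rightarrow> bool" and mu :: "('x \<times> 'y) pmf"
    and M :: "'x list \<Rightarrow> 'y list \<Rightarrow> bool list pmf"
  assumes supp: "set_pmf mu \<subseteq> {(x, y). f x y}"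
    and q: "q > 0"
    and P: "is_proof {xs. length xs = q} {ys. length ys = q} (fpow f) (replicate q True) M AccA AccB"
    and t: "0 < t" "t < 1/2"
  shows "\<exists>M' A' B'. is_proof UNIV UNIV f True M' A' B' \<and>
     real q * mutual_info_pmf (joint_pmf mu M')
       \<le> log 2 (1/t) * measure_pmf.expectation (joint_pmf (pmf_pow mu q) M) (\<lambda>(_, m). real (length m))
          - log 2 (1 - 2*t)"
proof -
  define Mz where "Mz zs = M (map fst zs) (map snd zs)" for zs
  define J where "J = bind_pmf (replicate_pmf q mu) (\<lambda>zs. map_pmf (Pair zs) (Mz zs))"
  define D where "D j z = bind_pmf (replicate_pmf (q-1) mu) (\<lambda>ws. Mz (ins j z ws))" for j z
  define K where "K z = bind_pmf (pmf_of_set {..<q}) (\<lambda>j. map_pmf (Pair j) (D j z))" for z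
  define M' where "M' x y = map_pmf enc (K (x,y))" for x y
  define A' where "A' x m' = (\<exists>j m xs. m' = enc (j,m) \<and> j < q \<and> length xs = q \<and> xs!j = x \<and> AccA xs m)" for x m'
  define B' where "B' y m' = (\<exists>j m ys. m' = enc (j,m) \<and> j < q \<and> length ys = q \<and> ys!j = y \<and> AccB ys m)" for y m'
  have Pfin: "finite (set_pmf (Mz zs))" if "length zs = q" for zs
    using P that unfolding is_proof_def Mz_def by auto
  have Pcomp: "AccA (map fst zs) m \<and> AccB (map snd zs) m"
    if "length zs = q" "set zs \<subseteq> {(x,y). f x y}" "m \<in> set_pmf (Mz zs)" for zs m
  proof -
    have "fpow f (map fst zs) (map snd zs) = replicate q True"
      using that(1,2) by (subst fpow_all) (auto simp: nth_mem case_prod_unfold dest!: subsetD[of _ _ "zs ! _"])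
    moreover have "fpow f (map fst zs) (map snd zs) = replicate q True \<longrightarrow>
        (\<forall>m\<in>set_pmf (M (map fst zs) (map snd zs)). AccA (map fst zs) m \<and> AccB (map snd zs) m)"
      using P[unfolded is_proof_def, rule_format, of "map fst zs" "map snd zs"] that(1) by simp
    ultimately show ?thesis using that(3) unfolding Mz_def by auto
  qed
  have Psound: "\<not> (AccA xs m \<and> AccB ys m)"
    if "length xs = q" "length ys = q" "fpow f xs ys \<noteq> replicate q True" for xs ys m
    using P that unfolding is_proof_def by auto
  have q1: "j < q \<Longrightarrow> j \<le> q - 1" for j using q by simp
  have lenins: "length (ins j z ws) = q" if "j < q" "ws \<in> set_pmf (replicate_pmf (q-1) mu)" for j z ws
    using that q set_replicate_pmf_len[OF that(2)] by (simp add: length_ins)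
  have finD: "finite (set_pmf (D j z))" if "j < q" for j z
    unfolding D_def set_bind_pmf
    by (intro finite_UN_I finite_set_replicate_pmf Pfin lenins[OF that])
  have setpos: "set_pmf (pmf_of_set {..<q}) = {..<q}" using q by (intro set_pmf_of_set) auto
  have finK: "finite (set_pmf (K z))" for z
    unfolding K_def set_bind_pmf setpos set_map_pmf using finD by blast
  have proof': "is_proof UNIV UNIV f True M' A' B'"
    unfolding is_proof_def
  proof (intro ballI conjI impI allI)
    fix x y
    show "finite (set_pmf (M' x y))" using finK by (simp add: M'_def)
  next
    fix x y m' assume fxy': "f x y = True" and m': "m' \<in> set_pmf (M' x y)"
    from fxy' have fxy: "f x y" by simp
    from m' obtain j m where j: "j < q" and m'eq: "m' = enc (j,m)" and m: "m \<in> set_pmf (D j (x,y))"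
      using q by (auto simp: M'_def K_def setpos)
    then obtain ws where ws: "ws \<in> set_pmf (replicate_pmf (q-1) mu)" and mz: "m \<in> set_pmf (Mz (ins j (x,y) ws))"
      by (auto simp: D_def)
    define zs where "zs = ins j (x,y) ws"
    have lz: "length zs = q" using lenins[OF j ws] by (simp add: zs_def)
    have sz: "set zs \<subseteq> {(x,y). f x y}"
      using set_replicate_pmf_len[OF ws] supp fxy by (auto simp: zs_def set_ins)
    have nz: "zs ! j = (x,y)" using set_replicate_pmf_len[OF ws] j by (simp add: zs_def nth_ins)
    have acc: "AccA (map fst zs) m \<and> AccB (map snd zs) m" using Pcomp[OF lz sz] mz by (simp add: zs_def)
    show "A' x m'" unfolding A'_def using acc lz nz j m'eq
      by (intro exI[of _ j] exI[of _ m] exI[of _ "map fst zs"]) auto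
    show "B' y m'" unfolding B'_def using acc lz nz j m'eq
      by (intro exI[of _ j] exI[of _ m] exI[of _ "map snd zs"]) auto
  next
    fix x y m' assume nf: "f x y \<noteq> True"
    show "\<not> A' x m' \<or> \<not> B' y m'"
    proof (rule ccontr)
      assume "\<not> (\<not> A' x m' \<or> \<not> B' y m')"
      then obtain j m xs j2 m2 ys where a: "m' = enc (j,m)" "j < q" "length xs = q" "xs!j = x" "AccA xs m"
        and b: "m' = enc (j2,m2)" "length ys = q" "ys!j2 = y" "AccB ys m2"
        unfolding A'_def B'_def by blast
      have "(j,m) = (j2,m2)" using a(1) b(1) inj_enc by (auto dest: injD)
      then have eq: "j2 = j" "m2 = m" by auto
      have "fpow f xs ys \<noteq> replicate q True" using nf a b eq fpow_all[OF a(3) b(2)] by auto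
      then show False using Psound[OF a(3) b(2)] a(5) b(4) eq by auto
    qed
  qed
  define Jd where "Jd j = joint_pmf mu (\<lambda>x y. D j (x,y))" for j
  have JdJ: "Jd j = map_pmf (\<lambda>(zs,m). (zs!j, m)) J" if j: "j < q" for j
  proof -
    have "J = bind_pmf mu (\<lambda>z. bind_pmf (replicate_pmf (q-1) mu) (\<lambda>ws. map_pmf (Pair (ins j z ws)) (Mz (ins j z ws))))"
      unfolding J_def using rep_ins[OF q1[OF j], of mu] q by (simp add: bind_assoc_pmf bind_return_pmf)
    then have "map_pmf (\<lambda>(zs,m). (zs!j, m)) J = bind_pmf mu (\<lambda>z. bind_pmf (replicate_pmf (q-1) mu)
                 (\<lambda>ws. map_pmf (\<lambda>m. ((ins j z ws)!j, m)) (Mz (ins j z ws))))"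
      by (simp add: map_bind_pmf map_pmf_comp)
    also have "\<dots> = bind_pmf mu (\<lambda>z. bind_pmf (replicate_pmf (q-1) mu)
                 (\<lambda>ws. map_pmf (\<lambda>m. (z, m)) (Mz (ins j z ws))))"
      using j q by (intro bind_pmf_cong refl) (auto simp: nth_ins dest!: set_replicate_pmf_len)
    also have "\<dots> = Jd j"
      by (simp add: Jd_def joint_pmf_def D_def map_bind_pmf case_prod_unfold)
    finally show ?thesis by simp
  qed
  have finJ: "finite (set_pmf J)"
    using Pfin finite_set_replicate_pmf by (auto simp: J_def dest!: set_replicate_pmf_len)
  have margJ: "map_pmf fst J = replicate_pmf q mu"
    by (simp add: J_def map_bind_pmf map_pmf_comp bind_return_pmf')
  have finJd: "finite (set_pmf (Jd j))" if "j < q" for j using finJ JdJ[OF that] by simp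
  have margJd: "map_pmf fst (Jd j) = mu" if "j < q" for j
  proof -
    have "map_pmf fst (Jd j) = map_pmf (\<lambda>zs. zs!j) (map_pmf fst J)"
      using JdJ[OF that] by (simp add: map_pmf_comp case_prod_unfold)
    then show ?thesis using margJ map_nth_replicate_pmf[OF that, of mu] by simp
  qed
  have jointK: "joint_pmf mu (\<lambda>x y. K (x,y)) = bind_pmf (pmf_of_set {..<q}) (\<lambda>j. map_pmf (\<lambda>(z,m). (z,(j,m))) (Jd j))"
  proof -
    have "joint_pmf mu (\<lambda>x y. K (x,y)) = bind_pmf mu (\<lambda>z. bind_pmf (pmf_of_set {..<q}) (\<lambda>j. map_pmf (\<lambda>m. (z,(j,m))) (D j z)))"
      by (simp add: joint_pmf_def K_def map_bind_pmf map_pmf_comp case_prod_unfold)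
    also have "\<dots> = bind_pmf (pmf_of_set {..<q}) (\<lambda>j. bind_pmf mu (\<lambda>z. map_pmf (\<lambda>m. (z,(j,m))) (D j z)))"
      by (rule bind_commute_pmf)
    also have "\<dots> = bind_pmf (pmf_of_set {..<q}) (\<lambda>j. map_pmf (\<lambda>(z,m). (z,(j,m))) (Jd j))"
      by (simp add: Jd_def joint_pmf_def map_bind_pmf map_pmf_comp case_prod_unfold)
    finally show ?thesis .
  qed
  have jointM': "joint_pmf mu M' = map_pmf (\<lambda>(u,v). (u, enc v)) (joint_pmf mu (\<lambda>x y. K (x,y)))"
    by (simp add: joint_pmf_def M'_def map_bind_pmf map_pmf_comp case_prod_unfold)
  have MIeq: "mutual_info_pmf (joint_pmf mu M') = (\<Sum>j<q. mutual_info_pmf (Jd j)) / q"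
    unfolding jointM' mi_map_inj[OF inj_enc] jointK
    using q finJd margJd by (subst mi_mixture) auto
  define w where "w m = (1 - 2*t) * t ^ length m" for m :: "bool list"
  have wpos: "w m > 0" for m using t by (simp add: w_def)
  have wsum: "sum w (snd ` set_pmf J) \<le> 1"
    unfolding w_def using t finJ by (intro sum_geom_lists) auto
  have coreb: "(\<Sum>j<q. mutual_info_pmf (map_pmf (\<lambda>(zs,m). (zs!j, m)) J))
          \<le> measure_pmf.expectation J (\<lambda>(zs,m). - log 2 (w m))"
    by (rule core[OF finJ margJ wpos wsum])
  have intJ: "integrable (measure_pmf J) g" for g :: "_ \<Rightarrow> real"
    using finJ by (rule integrable_measure_pmf_finite)
  have "measure_pmf.expectation J (\<lambda>(zs,m). - log 2 (w m))
      = measure_pmf.expectation J (\<lambda>(zs,m). log 2 (1/t) * real (length m) - log 2 (1 - 2*t))"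
    using t by (intro Bochner_Integration.integral_cong refl)
      (auto simp: w_def log_mult log_nat_power log_divide)
  also have "\<dots> = log 2 (1/t) * measure_pmf.expectation J (\<lambda>(zs,m). real (length m)) - log 2 (1 - 2*t)"
    by (simp add: case_prod_unfold Bochner_Integration.integral_diff[OF intJ intJ])
  also have "measure_pmf.expectation J (\<lambda>(zs,m). real (length m))
      = measure_pmf.expectation (joint_pmf (pmf_pow mu q) M) (\<lambda>(_, m). real (length m))"
    by (simp add: joint_pmf_pow J_def Mz_def case_prod_unfold)
  finally have Ebound: "measure_pmf.expectation J (\<lambda>(zs,m). - log 2 (w m))
      = log 2 (1/t) * measure_pmf.expectation (joint_pmf (pmf_pow mu q) M) (\<lambda>(_, m). real (length m)) - log 2 (1 - 2*t)" .
  have "real q * mutual_info_pmf (joint_pmf mu M') = (\<Sum>j<q. mutual_info_pmf (Jd j))"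
    using q by (simp add: MIeq)
  also have "\<dots> = (\<Sum>j<q. mutual_info_pmf (map_pmf (\<lambda>(zs,m). (zs!j, m)) J))"
    using JdJ by simp
  finally have "real q * mutual_info_pmf (joint_pmf mu M')
       \<le> log 2 (1/t) * measure_pmf.expectation (joint_pmf (pmf_pow mu q) M) (\<lambda>(_, m). real (length m))
          - log 2 (1 - 2*t)" using coreb Ebound by simp
  then show ?thesis using proof' by blast
qed


function encb :: "nat \<Rightarrow> bool list \<Rightarrow> bool list" where
  "encb b m = (if b = 0 \<or> length m < b then False # replicate (length m) True @ False # m
               else True # take b m @ encb b (drop b m))"
  by pat_completeness auto
termination by (relation "Wellfounded.measure (\<lambda>(b,m). length m)") auto

declare encb.simps[simp del]

lemma encb_short: "b = 0 \<or> length m < b \<Longrightarrow> encb b m = False # replicate (length m) True @ False # m"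
  by (subst encb.simps) simp

lemma encb_long: "\<not> (b = 0 \<or> length m < b) \<Longrightarrow> encb b m = True # take b m @ encb b (drop b m)"
  by (subst encb.simps) simp

lemma encb_prefix: "encb b u @ v = encb b u' @ v' \<Longrightarrow> u = u' \<and> v = v'"
proof (induction b u arbitrary: u' v v' rule: encb.induct)
  case (1 b u)
  show ?case
  proof (cases "b = 0 \<or> length u < b")
    case True
    note su = True
    have eu: "encb b u = False # replicate (length u) True @ False # u" by (rule encb_short[OF su])
    show ?thesis
    proof (cases "b = 0 \<or> length u' < b")
      case True
      have eu': "encb b u' = False # replicate (length u') True @ False # u'" by (rule encb_short[OF True])
      have "replicate (length u) True @ False # (u @ v) = replicate (length u') True @ False # (u' @ v')"
        using "1.prems" unfolding eu eu' by simp
      then have "length u = length u'" "u @ v = u' @ v'" using rep_true_eq by blast+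
      then show ?thesis by (simp add: append_eq_append_conv)
    next
      case False
      have eu': "encb b u' = True # take b u' @ encb b (drop b u')" by (rule encb_long[OF False])
      show ?thesis using "1.prems" unfolding eu eu' by simp
    qed
  next
    case False
    note lu = False
    have eu: "encb b u = True # take b u @ encb b (drop b u)" by (rule encb_long[OF lu])
    show ?thesis
    proof (cases "b = 0 \<or> length u' < b")
      case True
      have eu': "encb b u' = False # replicate (length u') True @ False # u'" by (rule encb_short[OF True])
      show ?thesis using "1.prems" unfolding eu eu' by simp
    next
      case False
      have eu': "encb b u' = True # take b u' @ encb b (drop b u')" by (rule encb_long[OF False])
      have "take b u @ (encb b (drop b u) @ v) = take b u' @ (encb b (drop b u') @ v')"
        using "1.prems" unfolding eu eu' by simp
      moreover have "length (take b u) = length (take b u')" using lu False by simp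
      ultimately have "take b u = take b u'" "encb b (drop b u) @ v = encb b (drop b u') @ v'"
        by (auto simp: append_eq_append_conv)
      with "1.IH"[OF lu] have "take b u = take b u'" "drop b u = drop b u'" "v = v'" by blast+
      then show ?thesis by (metis append_take_drop_id)
    qed
  qed
qed

lemma encb_len: "b > 0 \<Longrightarrow> real (length (encb b m)) \<le> real (length m) * (1 + 1/b) + 2 * real b"
proof (induction b m rule: encb.induct)
  case (1 b m)
  show ?case
  proof (cases "length m < b")
    case True
    then have "real (length (encb b m)) = 2 + 2 * real (length m)"
      using "1.prems" by (simp add: encb_short[of b m])
    also have "\<dots> \<le> real (length m) * (1 + 1/b) + 2 * real b"
    proof -
      have "real (length m) + 1 \<le> b" using True by linarith
      moreover have "0 \<le> real (length m) / b" by simp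
      moreover have "real b \<ge> 1" using "1.prems" by simp
      ultimately have "2 + 2 * real (length m) \<le> real (length m) + 2 * b + real (length m) / b" by linarith
      then show ?thesis by (simp add: algebra_simps)
    qed
    finally show ?thesis .
  next
    case False
    have Lm: "b \<le> length m" using False by simp
    have e: "length (encb b m) = 1 + b + length (encb b (drop b m))"
      using "1.prems" False Lm by (simp add: encb_long[of b m] min_def)
    have ih: "real (length (encb b (drop b m))) \<le> real (length (drop b m)) * (1 + 1/b) + 2 * real b"
      by (rule "1.IH") (use False "1.prems" in auto)
    have d: "real (length (drop b m)) = real (length m) - b" using Lm by simp
    have f: "(real (length m) - b) * (1 + 1/b) = real (length m) * (1 + 1/b) - b - 1"
      using "1.prems" by (simp add: field_simps)
    have e': "real (length (encb b m)) = 1 + real b + real (length (encb b (drop b m)))"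
      using e by simp
    have ih': "real (length (encb b (drop b m))) \<le> (real (length m) - b) * (1 + 1/b) + 2 * real b"
      using ih unfolding d .
    show ?thesis using e' ih' f by linarith
  qed
qed


lemma exp_bind_fin:
  assumes "finite (set_pmf p)" "\<And>x. x \<in> set_pmf p \<Longrightarrow> finite (set_pmf (F x))"
  shows "measure_pmf.expectation (bind_pmf p F) (h::_\<Rightarrow>real)
       = measure_pmf.expectation p (\<lambda>x. measure_pmf.expectation (F x) h)"
  using assms
  by (simp add: pmf_expectation_bind[of "set_pmf p"] integral_measure_pmf[of "set_pmf p"])

definition EL :: "('x \<times> 'y) pmf \<Rightarrow> nat \<Rightarrow> ('x list \<Rightarrow> 'y list \<Rightarrow> bool list pmf) \<Rightarrow> real" where
  "EL mu q M = measure_pmf.expectation (joint_pmf (pmf_pow mu q) M) (\<lambda>(_, m). real (length m))"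

lemma EL_eq:
  fixes mu :: "('x::finite \<times> 'y::finite) pmf"
  assumes P: "\<And>zs. length zs = q \<Longrightarrow> finite (set_pmf (M (map fst zs) (map snd zs)))"
  shows "EL mu q M = measure_pmf.expectation (replicate_pmf q mu)
      (\<lambda>zs. measure_pmf.expectation (M (map fst zs) (map snd zs)) (\<lambda>m. real (length m)))"
proof -
  have "EL mu q M = measure_pmf.expectation
     (bind_pmf (replicate_pmf q mu) (\<lambda>zs. map_pmf (Pair zs) (M (map fst zs) (map snd zs)))) (\<lambda>x. real (length (snd x)))"
    by (simp add: EL_def joint_pmf_pow case_prod_unfold)
  also have "\<dots> = measure_pmf.expectation (replicate_pmf q mu)
     (\<lambda>zs. measure_pmf.expectation (map_pmf (Pair zs) (M (map fst zs) (map snd zs))) (\<lambda>x. real (length (snd x))))"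
    using P by (intro exp_bind_fin finite_set_replicate_pmf) (auto dest: set_replicate_pmf_len)
  also have "\<dots> = measure_pmf.expectation (replicate_pmf q mu)
      (\<lambda>zs. measure_pmf.expectation (M (map fst zs) (map snd zs)) (\<lambda>m. real (length m)))"
    by simp
  finally show ?thesis .
qed

lemma all_less_add: "(\<forall>i<(p::nat)+r. P i) \<longleftrightarrow> (\<forall>i<p. P i) \<and> (\<forall>i<r. P (p+i))"
proof safe
  fix i assume "\<forall>i<p. P i" "\<forall>i<r. P (p+i)" "i < p + r"
  then show "P i" by (cases "i < p") (auto dest: spec[of _ "i - p"])
qed auto

lemma fpow_split:
  assumes "length xs = p + r" "length ys = p + r"
  shows "fpow f xs ys = replicate (p+r) True \<longleftrightarrow>
     fpow f (take p xs) (take p ys) = replicate p True \<and> fpow f (drop p xs) (drop p ys) = replicate r True"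
  using assms by (simp add: fpow_all all_less_add)

lemma map_take_rep: "map_pmf (take p) (replicate_pmf (p + r) mu) = replicate_pmf p mu"
proof -
  have "map_pmf (take p) (replicate_pmf (p + r) mu)
      = bind_pmf (replicate_pmf p mu) (\<lambda>xs. bind_pmf (replicate_pmf r mu) (\<lambda>ys. return_pmf (take p (xs @ ys))))"
    by (simp add: replicate_pmf_distrib map_bind_pmf)
  also have "\<dots> = bind_pmf (replicate_pmf p mu) (\<lambda>xs. bind_pmf (replicate_pmf r mu) (\<lambda>ys. return_pmf xs))"
    by (intro bind_pmf_cong refl) (auto dest: set_replicate_pmf_len)
  finally show ?thesis by (simp add: bind_pmf_const bind_return_pmf')
qed

lemma map_drop_rep: "map_pmf (drop p) (replicate_pmf (p + r) mu) = replicate_pmf r mu"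
proof -
  have "map_pmf (drop p) (replicate_pmf (p + r) mu)
      = bind_pmf (replicate_pmf p mu) (\<lambda>xs. bind_pmf (replicate_pmf r mu) (\<lambda>ys. return_pmf (drop p (xs @ ys))))"
    by (simp add: replicate_pmf_distrib map_bind_pmf)
  also have "\<dots> = bind_pmf (replicate_pmf p mu) (\<lambda>xs. bind_pmf (replicate_pmf r mu) (\<lambda>ys. return_pmf ys))"
    by (intro bind_pmf_cong refl) (auto dest: set_replicate_pmf_len)
  finally show ?thesis by (simp add: bind_pmf_const bind_return_pmf')
qed

lemma combine:
  fixes f :: "'x::finite \<Rightarrow> 'y::finite \<Rightarrow> bool" and mu :: "('x \<times> 'y) pmf"
  assumes P1: "is_proof {xs. length xs = p} {ys. length ys = p} (fpow f) (replicate p True) M1 A1 B1"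
    and P2: "is_proof {xs. length xs = r} {ys. length ys = r} (fpow f) (replicate r True) M2 A2 B2"
    and b: "b > 0"
  shows "\<exists>M A B. is_proof {xs. length xs = p + r} {ys. length ys = p + r} (fpow f) (replicate (p+r) True) M A B
     \<and> EL mu (p+r) M \<le> (1 + 1/b) * EL mu p M1 + 2 * real b + EL mu r M2"
proof -
  define M where "M xs ys = bind_pmf (M1 (take p xs) (take p ys))
      (\<lambda>m1. map_pmf (\<lambda>m2. encb b m1 @ m2) (M2 (drop p xs) (drop p ys)))" for xs ys
  define A where "A xs m = (\<exists>u v. m = encb b u @ v \<and> A1 (take p xs) u \<and> A2 (drop p xs) v)" for xs m
  define B where "B ys m = (\<exists>u v. m = encb b u @ v \<and> B1 (take p ys) u \<and> B2 (drop p ys) v)" for ys m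
  have P1i: "finite (set_pmf (M1 xs ys)) \<and> (fpow f xs ys = replicate p True \<longrightarrow> (\<forall>m\<in>set_pmf (M1 xs ys). A1 xs m \<and> B1 ys m))
      \<and> (fpow f xs ys \<noteq> replicate p True \<longrightarrow> (\<forall>m. \<not> A1 xs m \<or> \<not> B1 ys m))"
    if "length xs = p" "length ys = p" for xs ys
    using P1[unfolded is_proof_def, rule_format, of xs ys] that by simp
  have P2i: "finite (set_pmf (M2 xs ys)) \<and> (fpow f xs ys = replicate r True \<longrightarrow> (\<forall>m\<in>set_pmf (M2 xs ys). A2 xs m \<and> B2 ys m))
      \<and> (fpow f xs ys \<noteq> replicate r True \<longrightarrow> (\<forall>m. \<not> A2 xs m \<or> \<not> B2 ys m))"
    if "length xs = r" "length ys = r" for xs ys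
    using P2[unfolded is_proof_def, rule_format, of xs ys] that by simp
  have finM: "finite (set_pmf (M xs ys))" if "length xs = p + r" "length ys = p + r" for xs ys
    using P1i[of "take p xs" "take p ys"] P2i[of "drop p xs" "drop p ys"] that
    by (auto simp: M_def)
  have proof': "is_proof {xs. length xs = p + r} {ys. length ys = p + r} (fpow f) (replicate (p+r) True) M A B"
    unfolding is_proof_def
  proof (intro ballI conjI impI allI)
    fix xs :: "'x list" and ys :: "'y list" assume "xs \<in> {xs. length xs = p + r}" "ys \<in> {ys. length ys = p + r}"
    then have lx: "length xs = p + r" and ly: "length ys = p + r" by auto
    show "finite (set_pmf (M xs ys))" using finM[OF lx ly] .
  next
    fix xs :: "'x list" and ys :: "'y list" and m assume "xs \<in> {xs. length xs = p + r}" "ys \<in> {ys. length ys = p + r}"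
      and all: "fpow f xs ys = replicate (p + r) True" and m: "m \<in> set_pmf (M xs ys)"
    then have lx: "length xs = p + r" and ly: "length ys = p + r" by auto
    from all have a1: "fpow f (take p xs) (take p ys) = replicate p True"
      and a2: "fpow f (drop p xs) (drop p ys) = replicate r True" using fpow_split[OF lx ly] by auto
    from m obtain m1 m2 where m1: "m1 \<in> set_pmf (M1 (take p xs) (take p ys))"
      and m2: "m2 \<in> set_pmf (M2 (drop p xs) (drop p ys))" and meq: "m = encb b m1 @ m2"
      by (auto simp: M_def)
    have c1: "A1 (take p xs) m1 \<and> B1 (take p ys) m1" using P1i[of "take p xs" "take p ys"] lx ly a1 m1 by auto
    have c2: "A2 (drop p xs) m2 \<and> B2 (drop p ys) m2" using P2i[of "drop p xs" "drop p ys"] lx ly a2 m2 by auto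
    show "A xs m" unfolding A_def using c1 c2 meq by blast
    show "B ys m" unfolding B_def using c1 c2 meq by blast
  next
    fix xs :: "'x list" and ys :: "'y list" and m assume "xs \<in> {xs. length xs = p + r}" "ys \<in> {ys. length ys = p + r}"
      and nall: "fpow f xs ys \<noteq> replicate (p + r) True"
    then have lx: "length xs = p + r" and ly: "length ys = p + r" by auto
    show "\<not> A xs m \<or> \<not> B ys m"
    proof (rule ccontr)
      assume "\<not> (\<not> A xs m \<or> \<not> B ys m)"
      then obtain u v u' v' where a: "m = encb b u @ v" "A1 (take p xs) u" "A2 (drop p xs) v"
        and bb: "m = encb b u' @ v'" "B1 (take p ys) u'" "B2 (drop p ys) v'"
        unfolding A_def B_def by blast
      from a(1) bb(1) have "u = u'" "v = v'" using encb_prefix by metis+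
      moreover have "fpow f (take p xs) (take p ys) \<noteq> replicate p True \<or> fpow f (drop p xs) (drop p ys) \<noteq> replicate r True"
        using nall fpow_split[OF lx ly] by auto
      ultimately show False
        using P1i[of "take p xs" "take p ys"] P2i[of "drop p xs" "drop p ys"] lx ly a bb by auto
    qed
  qed
  define g1 where "g1 zs = measure_pmf.expectation (M1 (map fst zs) (map snd zs)) (\<lambda>m. real (length m))" for zs
  define g2 where "g2 zs = measure_pmf.expectation (M2 (map fst zs) (map snd zs)) (\<lambda>m. real (length m))" for zs
  define g where "g zs = measure_pmf.expectation (M (map fst zs) (map snd zs)) (\<lambda>m. real (length m))" for zs
  have fin1: "finite (set_pmf (M1 (map fst zs) (map snd zs)))" if "length zs = p" for zs
    using P1i[of "map fst zs" "map snd zs"] that by simp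
  have fin2: "finite (set_pmf (M2 (map fst zs) (map snd zs)))" if "length zs = r" for zs
    using P2i[of "map fst zs" "map snd zs"] that by simp
  have gle: "g zs \<le> (1 + 1/b) * g1 (take p zs) + 2 * real b + g2 (drop p zs)" if lz: "length zs = p + r" for zs
  proof -
    define X1 where "X1 = M1 (map fst (take p zs)) (map snd (take p zs))"
    define X2 where "X2 = M2 (map fst (drop p zs)) (map snd (drop p zs))"
    have MX: "M (map fst zs) (map snd zs) = bind_pmf X1 (\<lambda>m1. map_pmf (\<lambda>m2. encb b m1 @ m2) X2)"
      by (simp add: M_def X1_def X2_def take_map drop_map)
    have f1: "finite (set_pmf X1)" unfolding X1_def using fin1 lz by simp
    have f2: "finite (set_pmf X2)" unfolding X2_def using fin2 lz by simp
    have i1: "integrable (measure_pmf X1) h" for h :: "_ \<Rightarrow> real" using f1 by (rule integrable_measure_pmf_finite)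
    have i2: "integrable (measure_pmf X2) h" for h :: "_ \<Rightarrow> real" using f2 by (rule integrable_measure_pmf_finite)
    have "g zs = measure_pmf.expectation X1 (\<lambda>m1. measure_pmf.expectation (map_pmf (\<lambda>m2. encb b m1 @ m2) X2) (\<lambda>m. real (length m)))"
      unfolding g_def MX using f1 f2 by (intro exp_bind_fin) auto
    also have "\<dots> = measure_pmf.expectation X1 (\<lambda>m1. real (length (encb b m1)) + measure_pmf.expectation X2 (\<lambda>m. real (length m)))"
      by (intro Bochner_Integration.integral_cong refl)
        (simp add: Bochner_Integration.integral_add[OF i2 i2])
    also have "\<dots> = measure_pmf.expectation X1 (\<lambda>m1. real (length (encb b m1))) + g2 (drop p zs)"
      by (simp add: Bochner_Integration.integral_add[OF i1 i1] g2_def X2_def)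
    also have "measure_pmf.expectation X1 (\<lambda>m1. real (length (encb b m1)))
        \<le> measure_pmf.expectation X1 (\<lambda>m1. real (length m1) * (1 + 1/b) + 2 * real b)"
      by (intro integral_mono[OF i1 i1] encb_len b)
    also have "\<dots> = measure_pmf.expectation X1 (\<lambda>m1. real (length m1) * (1 + 1/b))
         + measure_pmf.expectation X1 (\<lambda>_. 2 * real b)"
      by (rule Bochner_Integration.integral_add[OF i1 i1])
    also have "\<dots> = (1 + 1/b) * g1 (take p zs) + 2 * real b"
      unfolding g1_def X1_def[symmetric] by simp
    finally show ?thesis by simp
  qed
  have frep: "finite (set_pmf (replicate_pmf n mu))" for n by (rule finite_set_replicate_pmf)
  have ir: "integrable (measure_pmf (replicate_pmf n mu)) h" for n and h :: "_ \<Rightarrow> real"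
    using frep by (rule integrable_measure_pmf_finite)
  have "EL mu (p+r) M = measure_pmf.expectation (replicate_pmf (p+r) mu) g"
    unfolding g_def using finM by (intro EL_eq) simp
  also have "\<dots> \<le> measure_pmf.expectation (replicate_pmf (p+r) mu)
      (\<lambda>zs. (1 + 1/b) * g1 (take p zs) + 2 * real b + g2 (drop p zs))"
    by (intro integral_mono_AE ir) (auto simp: AE_measure_pmf_iff gle dest: set_replicate_pmf_len)
  also have "\<dots> = (1 + 1/b) * measure_pmf.expectation (replicate_pmf (p+r) mu) (\<lambda>zs. g1 (take p zs))
       + 2 * real b + measure_pmf.expectation (replicate_pmf (p+r) mu) (\<lambda>zs. g2 (drop p zs))"
    by (simp add: Bochner_Integration.integral_add[OF ir ir])
  also have "measure_pmf.expectation (replicate_pmf (p+r) mu) (\<lambda>zs. g1 (take p zs)) = EL mu p M1"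
  proof -
    have "measure_pmf.expectation (replicate_pmf (p+r) mu) (\<lambda>zs. g1 (take p zs))
        = measure_pmf.expectation (map_pmf (take p) (replicate_pmf (p+r) mu)) g1" by simp
    also have "\<dots> = EL mu p M1" unfolding map_take_rep g1_def using fin1 by (intro EL_eq[symmetric]) auto
    finally show ?thesis .
  qed
  also have "measure_pmf.expectation (replicate_pmf (p+r) mu) (\<lambda>zs. g2 (drop p zs)) = EL mu r M2"
  proof -
    have "measure_pmf.expectation (replicate_pmf (p+r) mu) (\<lambda>zs. g2 (drop p zs))
        = measure_pmf.expectation (map_pmf (drop p) (replicate_pmf (p+r) mu)) g2" by simp
    also have "\<dots> = EL mu r M2" unfolding map_drop_rep g2_def using fin2 by (intro EL_eq[symmetric]) auto
    finally show ?thesis .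
  qed
  finally show ?thesis using proof' by blast
qed


context
  fixes f :: "'x::finite \<Rightarrow> 'y::finite \<Rightarrow> bool" and mu :: "('x \<times> 'y) pmf"
begin

definition SS :: "nat \<Rightarrow> real set" where
  "SS q = {EL mu q M | M AccA AccB.
      is_proof {xs. length xs = q} {ys. length ys = q} (fpow f) (replicate q True) M AccA AccB}"

lemma CC_SS: "CC_pow f mu q = Inf (SS q)"
  unfolding CC_pow_def SS_def EL_def ..

lemma EL_nonneg: "EL mu q M \<ge> 0"
  unfolding EL_def by (intro integral_nonneg_AE) (auto simp: case_prod_unfold)

lemma bdd_SS: "bdd_below (SS q)"
  unfolding SS_def by (rule bdd_belowI[of _ 0]) (auto intro: EL_nonneg)

lemma proof0: "is_proof {xs. length xs = 0} {ys. length ys = 0} (fpow f) (replicate 0 True)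
   (\<lambda>_ _. return_pmf []) (\<lambda>_ _. True) (\<lambda>_ _. True)"
  unfolding is_proof_def by (auto simp: fpow_def)

lemma proof1: "is_proof {xs. length xs = 1} {ys. length ys = 1} (fpow f) (replicate 1 True)
   (\<lambda>xs _. return_pmf (replicate (to_nat (hd xs)) True))
   (\<lambda>xs m. m = replicate (to_nat (hd xs)) True)
   (\<lambda>ys m. \<exists>x. m = replicate (to_nat x) True \<and> f x (hd ys))"
  unfolding is_proof_def
proof (intro ballI)
  fix xs :: "'x list" and ys :: "'y list" assume "xs \<in> {xs. length xs = 1}" "ys \<in> {ys. length ys = 1}"
  then obtain x y where xs: "xs = [x]" and ys: "ys = [y]" by (auto simp: length_Suc_conv)
  have inj: "replicate (to_nat a) True = replicate (to_nat (b::'x)) True \<Longrightarrow> a = b" for a b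
    by (metis length_replicate from_nat_to_nat)
  show "finite (set_pmf (return_pmf (replicate (to_nat (hd xs)) True))) \<and>
        (fpow f xs ys = replicate 1 True \<longrightarrow>
         (\<forall>m\<in>set_pmf (return_pmf (replicate (to_nat (hd xs)) True)).
             m = replicate (to_nat (hd xs)) True \<and> (\<exists>x. m = replicate (to_nat x) True \<and> f x (hd ys)))) \<and>
        (fpow f xs ys \<noteq> replicate 1 True \<longrightarrow>
         (\<forall>m. \<not> m = replicate (to_nat (hd xs)) True \<or> \<not> (\<exists>x. m = replicate (to_nat x) True \<and> f x (hd ys))))"
    by (auto simp: xs ys fpow_def dest: inj)
qed

lemma exists_proof: "\<exists>M A B. is_proof {xs. length xs = q} {ys. length ys = q} (fpow f) (replicate q True) M A B"
proof (induction q)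
  case 0 then show ?case using proof0 by blast
next
  case (Suc q)
  then obtain M A B where P: "is_proof {xs. length xs = q} {ys. length ys = q} (fpow f) (replicate q True) M A B" by blast
  from combine[OF proof1 P, of 1 mu] show ?case by auto
qed

lemma SS_ne: "SS q \<noteq> {}"
  using exists_proof[of q] unfolding SS_def by blast

lemma CC_nonneg: "CC_pow f mu q \<ge> 0"
  unfolding CC_SS using SS_ne by (rule cInf_greatest) (auto simp: SS_def intro: EL_nonneg)

lemma CC_approx:
  assumes "e > 0"
  obtains M A B where "is_proof {xs. length xs = q} {ys. length ys = q} (fpow f) (replicate q True) M A B"
    "EL mu q M < CC_pow f mu q + e"
proof -
  have "Inf (SS q) < CC_pow f mu q + e" using assms CC_SS by simp
  from cInf_lessD[OF SS_ne this] show ?thesis using that unfolding SS_def by blast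
qed

lemma CC_le: "is_proof {xs. length xs = q} {ys. length ys = q} (fpow f) (replicate q True) M A B
   \<Longrightarrow> CC_pow f mu q \<le> EL mu q M"
  unfolding CC_SS by (rule cInf_lower[OF _ bdd_SS]) (auto simp: SS_def)

lemma CC_subadd:
  assumes b: "b > 0"
  shows "CC_pow f mu (p + r) \<le> (1 + 1/b) * CC_pow f mu p + 2 * real b + CC_pow f mu r"
proof (rule field_le_epsilon)
  fix e :: real assume e: "e > 0"
  define e' where "e' = e / (2 + 1/b)"
  have e': "e' > 0" unfolding e'_def using e b by (intro divide_pos_pos) (auto intro: add_pos_nonneg)
  obtain M1 A1 B1 where P1: "is_proof {xs. length xs = p} {ys. length ys = p} (fpow f) (replicate p True) M1 A1 B1"
     and E1: "EL mu p M1 < CC_pow f mu p + e'" using CC_approx[OF e'] by blast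
  obtain M2 A2 B2 where P2: "is_proof {xs. length xs = r} {ys. length ys = r} (fpow f) (replicate r True) M2 A2 B2"
     and E2: "EL mu r M2 < CC_pow f mu r + e'" using CC_approx[OF e'] by blast
  obtain M A B where P: "is_proof {xs. length xs = p + r} {ys. length ys = p + r} (fpow f) (replicate (p+r) True) M A B"
     and E: "EL mu (p+r) M \<le> (1 + 1/b) * EL mu p M1 + 2 * real b + EL mu r M2"
    using combine[OF P1 P2 b, of mu] by blast
  have "CC_pow f mu (p + r) \<le> EL mu (p+r) M" by (rule CC_le[OF P])
  also have "\<dots> \<le> (1 + 1/b) * (CC_pow f mu p + e') + 2 * real b + (CC_pow f mu r + e')"
    using E E1 E2 b by (smt (verit, best) divide_nonneg_nonneg mult_left_mono of_nat_0_le_iff)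
  also have "\<dots> = (1 + 1/b) * CC_pow f mu p + 2 * real b + CC_pow f mu r + ((1 + 1/b) * e' + e')"
    by (simp add: algebra_simps)
  also have "(1 + 1/b) * e' + e' = e"
  proof -
    have "(1 + 1/b) * e' + e' = e' * (2 + 1/b)" by (simp add: algebra_simps)
    also have "\<dots> = e"
    proof -
      have "2 + 1 / real b > 0" by (intro add_pos_nonneg) auto
      then show ?thesis unfolding e'_def by simp
    qed
    finally show ?thesis .
  qed
  finally show "CC_pow f mu (p + r) \<le> (1 + 1/b) * CC_pow f mu p + 2 * real b + CC_pow f mu r + e" .
qed

lemma CC_iter:
  assumes b: "b > 0"
  shows "CC_pow f mu (k * p + r) \<le> real k * ((1 + 1/b) * CC_pow f mu p + 2 * real b) + CC_pow f mu r"
proof (induction k)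
  case 0 then show ?case by simp
next
  case (Suc k)
  have "CC_pow f mu (Suc k * p + r) = CC_pow f mu (p + (k * p + r))" by (simp add: add.assoc)
  also have "\<dots> \<le> (1 + 1/b) * CC_pow f mu p + 2 * real b + CC_pow f mu (k * p + r)"
    by (rule CC_subadd[OF b])
  also have "\<dots> \<le> (1 + 1/b) * CC_pow f mu p + 2 * real b + (real k * ((1 + 1/b) * CC_pow f mu p + 2 * real b) + CC_pow f mu r)"
    using Suc.IH by simp
  moreover have "real (Suc k) * ((1 + 1/b) * CC_pow f mu p + 2 * real b)
      = ((1 + 1/b) * CC_pow f mu p + 2 * real b) + real k * ((1 + 1/b) * CC_pow f mu p + 2 * real b)"
    by (simp add: algebra_simps add_divide_distrib)
  ultimately show ?case by linarith
qed

lemma IC_bound: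
  assumes supp: "set_pmf mu \<subseteq> {(x, y). f x y}" and q: "q > 0" and t: "0 < t" "t < 1/2"
  shows "real q * IC_ext1 f mu \<le> log 2 (1/t) * CC_pow f mu q - log 2 (1 - 2*t)"
proof (rule field_le_epsilon)
  fix e :: real assume e: "e > 0"
  have lt: "log 2 (1/t) > 0" using t by simp
  define e' where "e' = e / log 2 (1/t)"
  have e': "e' > 0" using e lt by (simp add: e'_def)
  obtain M A B where P: "is_proof {xs. length xs = q} {ys. length ys = q} (fpow f) (replicate q True) M A B"
     and E: "EL mu q M < CC_pow f mu q + e'" using CC_approx[OF e'] by blast
  obtain M' A' B' where P': "is_proof UNIV UNIV f True M' A' B'"
    and I: "real q * mutual_info_pmf (joint_pmf mu M') \<le> log 2 (1/t) * EL mu q M - log 2 (1 - 2*t)"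
    using single_copy[OF supp q P t] unfolding EL_def by blast
  have "IC_ext1 f mu \<le> mutual_info_pmf (joint_pmf mu M')"
    unfolding IC_ext1_def
    by (rule cInf_lower) (use P' in \<open>auto intro!: bdd_belowI[of _ 0] mutual_info_nonneg\<close>)
  then have "real q * IC_ext1 f mu \<le> real q * mutual_info_pmf (joint_pmf mu M')"
    by (intro mult_left_mono) auto
  also have "\<dots> \<le> log 2 (1/t) * EL mu q M - log 2 (1 - 2*t)" by (rule I)
  also have "\<dots> \<le> log 2 (1/t) * (CC_pow f mu q + e') - log 2 (1 - 2*t)"
    using E lt by (intro diff_right_mono mult_left_mono) auto
  also have "\<dots> = log 2 (1/t) * CC_pow f mu q - log 2 (1 - 2*t) + e"
    using lt by (simp add: e'_def algebra_simps)
  finally show "real q * IC_ext1 f mu \<le> log 2 (1/t) * CC_pow f mu q - log 2 (1 - 2*t) + e" .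
qed

definition Cb :: real where "Cb = 2 * CC_pow f mu 1 + 2 + CC_pow f mu 0"

lemma Cb_nonneg: "Cb \<ge> 0"
  unfolding Cb_def using CC_nonneg[of 1] CC_nonneg[of 0] by simp

lemma s_bound: "CC_pow f mu n / n \<le> Cb"
proof (cases "n = 0")
  case True then show ?thesis using Cb_nonneg by simp
next
  case False
  have "CC_pow f mu (n * 1 + 0) \<le> real n * ((1 + 1/real (1::nat)) * CC_pow f mu 1 + 2 * real (1::nat)) + CC_pow f mu 0"
    by (rule CC_iter) simp
  then have "CC_pow f mu n \<le> real n * (2 * CC_pow f mu 1 + 2) + CC_pow f mu 0" by simp
  also have "\<dots> \<le> real n * (2 * CC_pow f mu 1 + 2) + real n * CC_pow f mu 0"
    using False CC_nonneg[of 0] by (intro add_left_mono) (simp add: mult_le_cancel_right1)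
  also have "\<dots> = real n * Cb" by (simp add: Cb_def algebra_simps)
  finally show ?thesis using False by (simp add: field_simps)
qed

lemma s_nonneg: "CC_pow f mu n / n \<ge> 0"
  using CC_nonneg[of n] by simp

lemma key:
  assumes e: "e > 0"
  shows "\<exists>P. \<forall>p\<ge>P. eventually (\<lambda>n. CC_pow f mu n / n \<le> CC_pow f mu p / p + e) sequentially"
proof -
  define b :: nat where "b = nat \<lceil>3 * Cb / e\<rceil> + 1"
  have b0: "b > 0" by (simp add: b_def)
  have bC: "Cb / b \<le> e / 3"
  proof -
    have "3 * Cb / e \<le> real b" unfolding b_def by linarith
    then have "3 * Cb \<le> e * real b" using e by (simp add: field_simps)
    then show ?thesis using b0 e by (simp add: field_simps)
  qed
  define P :: nat where "P = nat \<lceil>6 * b / e\<rceil> + 1"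
  show ?thesis
  proof (intro exI allI impI)
    fix p assume pP: "P \<le> p"
    have p0: "p > 0" using pP by (simp add: P_def)
    have bp: "2 * real b / p \<le> e / 3"
    proof -
      have "6 * real b / e \<le> real p" using pP unfolding P_def by linarith
      then have "6 * real b \<le> e * real p" using e by (simp add: field_simps)
      then show ?thesis using p0 e by (simp add: field_simps)
    qed
    define R where "R = (\<Sum>r<p. CC_pow f mu r)"
    have R0: "R \<ge> 0" unfolding R_def by (intro sum_nonneg CC_nonneg)
    have Rr: "CC_pow f mu r \<le> R" if "r < p" for r
      unfolding R_def using that by (intro member_le_sum CC_nonneg) auto
    define N :: nat where "N = nat \<lceil>3 * R / e\<rceil> + 1"
    show "eventually (\<lambda>n. CC_pow f mu n / n \<le> CC_pow f mu p / p + e) sequentially"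
      unfolding eventually_sequentially
    proof (intro exI allI impI)
      fix n assume nN: "N \<le> n"
      have n0: "n > 0" using nN by (simp add: N_def)
      have Rn: "R / n \<le> e / 3"
      proof -
        have "3 * R / e \<le> real n" using nN unfolding N_def by linarith
        then have "3 * R \<le> e * real n" using e by (simp add: field_simps)
        then show ?thesis using n0 e by (simp add: field_simps)
      qed
      define k where "k = n div p"
      define r where "r = n mod p"
      have nkr: "n = k * p + r" by (simp add: k_def r_def)
      have rp: "r < p" using p0 by (simp add: r_def)
      define X where "X = (1 + 1/b) * CC_pow f mu p + 2 * real b"
      have X0: "X \<ge> 0" unfolding X_def using CC_nonneg[of p] by (intro add_nonneg_nonneg mult_nonneg_nonneg) auto
      have "CC_pow f mu n \<le> real k * X + CC_pow f mu r"
        unfolding nkr X_def by (rule CC_iter[OF b0])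
      also have "\<dots> \<le> real k * X + R" using Rr[OF rp] by simp
      finally have Cn: "CC_pow f mu n \<le> real k * X + R" .
      have kpn: "real k * real p \<le> real n" using nkr by (metis le_add1 of_nat_le_iff of_nat_mult)
      have "CC_pow f mu n / n \<le> (real k * X + R) / n" using Cn n0 by (simp add: divide_right_mono)
      also have "\<dots> = real k * X / n + R / n" by (simp add: add_divide_distrib)
      also have "real k * X / n \<le> X / p"
      proof -
        have "real k * X * real p \<le> X * real n" using kpn X0
          by (metis mult.assoc mult.commute mult_left_mono)
        then show ?thesis using n0 p0 by (simp add: field_simps)
      qed
      also have "X / p = CC_pow f mu p / p + (CC_pow f mu p / p) / b + 2 * real b / p"
        unfolding X_def using p0 b0 by (simp add: field_simps)
      also have "(CC_pow f mu p / p) / b \<le> Cb / b"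
        using s_bound[of p] b0 by (intro divide_right_mono) auto
      finally show "CC_pow f mu n / n \<le> CC_pow f mu p / p + e" using bC bp Rn by linarith
    qed
  qed
qed

end

lemma IC_t_bound:
  fixes f :: "'x::finite \<Rightarrow> 'y::finite \<Rightarrow> bool" and mu :: "('x \<times> 'y) pmf"
  assumes supp: "set_pmf mu \<subseteq> {(x, y). f x y}" and t: "0 < t" "t < 1/2"
    and lim: "(\<lambda>n. CC_pow f mu n / real n) \<longlonglongrightarrow> ls"
  shows "IC_ext1 f mu \<le> log 2 (1/t) * ls"
proof -
  have "(\<lambda>n. log 2 (1/t) * (CC_pow f mu n / real n) - log 2 (1 - 2*t) / real n) \<longlonglongrightarrow> log 2 (1/t) * ls - 0"
    by (intro tendsto_diff tendsto_mult_left lim lim_const_over_n)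
  moreover have "eventually (\<lambda>n. IC_ext1 f mu \<le> log 2 (1/t) * (CC_pow f mu n / real n) - log 2 (1 - 2*t) / real n) sequentially"
    unfolding eventually_sequentially
  proof (intro exI[of _ 1] allI impI)
    fix n :: nat assume "1 \<le> n"
    then have n: "n > 0" by simp
    have "real n * IC_ext1 f mu \<le> log 2 (1/t) * CC_pow f mu n - log 2 (1 - 2*t)"
      by (rule IC_bound[OF supp n t])
    then show "IC_ext1 f mu \<le> log 2 (1/t) * (CC_pow f mu n / real n) - log 2 (1 - 2*t) / real n"
      using n by (simp add: field_simps)
  qed
  ultimately show ?thesis by (intro tendsto_le[OF trivial_limit_sequentially _ tendsto_const]) auto
qed

theorem theorem1p1:
  fixes f :: "'x::finite \<Rightarrow> 'y::finite \<Rightarrow> bool"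
    and mu :: "('x \<times> 'y) pmf"
  assumes "set_pmf mu \<subseteq> {(x, y). f x y}"
  shows "convergent (\<lambda>q. CC_pow f mu q / real q)
         \<and> IC_ext1 f mu \<le> lim (\<lambda>q. CC_pow f mu q / real q)"
proof -
  define s where "s n = CC_pow f mu n / real n" for n
  have s0: "s n \<ge> 0" for n unfolding s_def by (rule s_nonneg)
  have sb: "s n \<le> Cb f mu" for n unfolding s_def by (rule s_bound)
  define Ls where "Ls = limsup (\<lambda>n. ereal (s n))"
  define Li where "Li = liminf (\<lambda>n. ereal (s n))"
  have LsC: "Ls \<le> ereal (Cb f mu)" unfolding Ls_def by (intro Limsup_bounded) (simp add: sb)
  have Li0: "ereal 0 \<le> Li" unfolding Li_def by (intro Liminf_bounded) (simp add: s0)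
  have LiLs: "Li \<le> Ls" unfolding Li_def Ls_def by (intro Liminf_le_Limsup) simp
  obtain ls where ls: "Ls = ereal ls" using LsC Li0 LiLs by (cases Ls) auto
  obtain li where li: "Li = ereal li" using LsC Li0 LiLs ls by (cases Li) auto
  have "ls \<le> li"
  proof (rule field_le_epsilon)
    fix e :: real assume e: "e > 0"
    from key[OF e, of f mu] obtain P where P: "\<forall>p\<ge>P. eventually (\<lambda>n. s n \<le> s p + e) sequentially"
      unfolding s_def by blast
    have "eventually (\<lambda>p. ereal (ls - e) \<le> ereal (s p)) sequentially"
      unfolding eventually_sequentially
    proof (intro exI[of _ P] allI impI)
      fix p assume "P \<le> p"
      then have "Ls \<le> ereal (s p + e)" unfolding Ls_def using P by (intro Limsup_bounded) auto
      then show "ereal (ls - e) \<le> ereal (s p)" using ls by simp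
    qed
    then have "ereal (ls - e) \<le> Li" unfolding Li_def by (rule Liminf_bounded)
    then show "ls \<le> li + e" using li by simp
  qed
  then have tends: "s \<longlonglongrightarrow> ls"
    using ls li by (intro limsup_le_liminf_real) (auto simp: Ls_def Li_def)
  have conv: "convergent s" using tends by (auto simp: convergent_def)
  have limeq: "lim s = ls" using tends by (rule limI)
  have ls0: "ls \<ge> 0" using Li0 LiLs ls li by simp
  have "IC_ext1 f mu \<le> ls"
  proof (rule field_le_epsilon)
    fix e :: real assume e: "e > 0"
    define d where "d = e / (ls + 1)"
    have d: "d > 0" using e ls0 by (simp add: d_def)
    define t :: real where "t = 2 powr (- (1 + d))"
    have t0: "t > 0" by (simp add: t_def)
    have "t < 2 powr (-1)" unfolding t_def using d by (intro powr_less_mono) auto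
    then have t1: "t < 1/2" by (simp add: powr_minus_divide)
    have lt: "log 2 (1/t) = 1 + d"
      unfolding t_def by (simp add: powr_minus_divide[symmetric] powr_minus log_powr_cancel)
    have "IC_ext1 f mu \<le> log 2 (1/t) * ls"
      by (rule IC_t_bound[OF assms t0 t1 tends[unfolded s_def]])
    also have "\<dots> = ls + d * ls" by (simp add: lt algebra_simps)
    also have "d * ls \<le> e"
    proof -
      have "d * ls = e * (ls / (ls + 1))" using ls0 by (simp add: d_def field_simps)
      also have "\<dots> \<le> e * 1" using e ls0 by (intro mult_left_mono) auto
      finally show ?thesis by simp
    qed
    finally show "IC_ext1 f mu \<le> ls + e" by simp
  qed
  then show ?thesis using conv limeq unfolding s_def[abs_def] by simp
qed


end
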